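(* Let $n\geq 3$, $d\geq 2$ and $\ell\in\textup{int}(C_n)$. Then $V_d(\ell)$ contains $k$-dimensional polygons for every $k\in\{2,\ldots,\min\{d,n-1\}\}$.
   Context: $C_n$ is the set of $\ell=(l_1,\ldots,l_n)\in\mathbb{R}^n$ with $l_i>0$ and $l_i\leq\sum_{j\neq i}l_j$ for all $i$; $\textup{int}(C_n)$ is its interior (all these inequalities strict). $V_d(\ell)=\{(\mathbf{v}_1,\ldots,\mathbf{v}_{n-1})\in(\mathbb{R}^d)^{n-1} : \|\mathbf{v}_i-\mathbf{v}_{i-1}\|=l_i,\ i=1,\ldots,n\}$ with $\mathbf{v}_0=\mathbf{v}_n=\mathbf{0}$. The dimension of $P=(\mathbf{v}_1,\ldots,\mathbf{v}_{n-1})$ is the dimension of the linear span of its vertices $\mathbf{v}_1,\ldots,\mathbf{v}_{n-1}$. *)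

theory Defs
  imports "HOL-Analysis.Analysis"
begin

definition C_space :: "nat \<Rightarrow> (nat \<Rightarrow> real) set" where
  "C_space n = {l. \<forall>i\<in>{1..n}. 0 < l i \<and> l i \<le> (\<Sum>j\<in>{1..n}-{i}. l j)}"

definition int_C_space :: "nat \<Rightarrow> (nat \<Rightarrow> real) set" where
  "int_C_space n = {l. \<forall>i\<in>{1..n}. 0 < l i \<and> l i < (\<Sum>j\<in>{1..n}-{i}. l j)}"

text \<open>A polygon (v_1,...,v_{n-1}) is represented as a function v :: nat => 'a that
  vanishes outside {1..<n}; hence v 0 = v n = 0 automatically.\<close>
definition polygon_space :: "nat \<Rightarrow> (nat \<Rightarrow> real) \<Rightarrow> (nat \<Rightarrow> 'a::euclidean_space) set" where
  "polygon_space n l = {v. (\<forall>i. i \<notin> {1..<n} \<longrightarrow> v i = 0) \<and>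
                          (\<forall>i\<in>{1..n}. norm (v i - v (i - 1)) = l i)}"

definition polygon_dim :: "nat \<Rightarrow> (nat \<Rightarrow> 'a::euclidean_space) \<Rightarrow> nat" where
  "polygon_dim n v = dim (span (v ` {1..<n}))"

end

theory Submission
  imports Defs
begin

lemma split_vec:
  fixes f u :: "'a::euclidean_space"
  assumes f0: "f \<noteq> 0" and u1: "norm u = 1" and uf: "inner u f = 0" and x0: "x > 0" and y0: "y > 0"
    and lo: "\<bar>x - y\<bar> < norm f" and hi: "norm f < x + y"
  shows "\<exists>g \<alpha> \<beta>. norm g = x \<and> norm (f - g) = y \<and> g = \<alpha> *\<^sub>R f + \<beta> *\<^sub>R u \<and> \<beta> \<noteq> 0"
proof -
  define c where "c = norm f"
  have c0: "c > 0" using f0 c_def by simp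
  define a where "a = (c^2 + x^2 - y^2) / (2*c)"
  have "a < x"
  proof -
    have "\<bar>c - x\<bar> < y" using lo hi c_def by linarith
    hence "(c-x)^2 < y^2" by (metis abs_less_iff abs_power2 power2_abs power_strict_mono zero_le_power2 abs_ge_zero less_imp_le y0 pos2 abs_le_square_iff abs_square_less_1 power2_eq_square diff_ge_0_iff_ge less_eq_real_def)
    hence "c^2 + x^2 - y^2 < 2*c*x" by (simp add: power2_eq_square algebra_simps)
    thus ?thesis using c0 unfolding a_def by (simp add: divide_simps mult.commute mult.left_commute)
  qed
  moreover have "-x < a"
  proof -
    have "y < c + x" using lo c_def by linarith
    hence "y^2 < (c+x)^2" using y0 by (simp add: power_strict_mono)
    hence "-(2*c*x) < c^2 + x^2 - y^2" by (simp add: power2_eq_square algebra_simps)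
    thus ?thesis using c0 unfolding a_def by (simp add: divide_simps mult.commute mult.left_commute)
  qed
  ultimately have "\<bar>a\<bar> < x" by (simp add: abs_less_iff)
  hence "\<bar>a\<bar>^2 < x^2" by (intro power_strict_mono) auto
  hence ax: "a^2 < x^2" by simp
  define b where "b = sqrt (x^2 - a^2)"
  have b0: "b > 0" using ax b_def by simp
  have bb: "b^2 = x^2 - a^2" using ax b_def by simp
  define g where "g = (a/c) *\<^sub>R f + b *\<^sub>R u"
  have ff: "inner f f = c^2" using c_def by (simp add: power2_norm_eq_inner)
  have uu: "inner u u = 1" using u1 by (metis power2_norm_eq_inner power_one)
  have fu: "inner f u = 0" using uf by (simp add: inner_commute)
  have "(norm g)^2 = a^2 + b^2"
    unfolding power2_norm_eq_inner g_def
    using c0 by (simp add: inner_add_left inner_add_right ff uu fu uf power2_eq_square)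
  hence g1: "norm g = x" using bb x0 by (simp add: power2_eq_iff_nonneg)  
  have "(norm (f - g))^2 = (c - a)^2 + b^2"
  proof -
    have "f - g = ((c - a)/c) *\<^sub>R f - b *\<^sub>R u" unfolding g_def using c0
      by (simp add: algebra_simps diff_divide_distrib)
    thus ?thesis unfolding power2_norm_eq_inner
      using c0 by (simp add: inner_diff_left inner_diff_right ff uu fu uf power2_eq_square)
  qed
  also have "\<dots> = y^2" using bb c0 unfolding a_def by (simp add: power2_eq_square field_simps)
  finally have g2: "norm (f - g) = y" using y0 by (simp add: power2_eq_iff_nonneg)
  show ?thesis using g1 g2 g_def b0 by (metis less_irrefl)
qed

lemma span_split:
  fixes f u g :: "'a::euclidean_space"
  assumes "g = \<alpha> *\<^sub>R f + \<beta> *\<^sub>R u" "\<beta> \<noteq> 0"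
  shows "span (insert g (insert (f - g) A)) = span (insert u (insert f A))"
proof -
  have u: "u = (1/\<beta>) *\<^sub>R (g - \<alpha> *\<^sub>R (g + (f - g)))" using assms by simp
  show ?thesis unfolding span_eq
  proof (intro conjI subsetI)
    fix z assume "z \<in> insert g (insert (f - g) A)"
    moreover have "g \<in> span (insert u (insert f A))" using assms(1)
      by (simp add: span_add span_scale span_base)
    moreover have "f \<in> span (insert u (insert f A))" by (simp add: span_base)
    ultimately show "z \<in> span (insert u (insert f A))"
      by (auto intro: span_diff span_base)
  next
    fix z assume "z \<in> insert u (insert f A)"
    moreover have g: "g \<in> span (insert g (insert (f - g) A))" and fg: "f - g \<in> span (insert g (insert (f - g) A))"
      by (simp_all add: span_base)
    moreover have f: "f \<in> span (insert g (insert (f - g) A))"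
      using span_add[OF g fg] by simp
    moreover have "u \<in> span (insert g (insert (f - g) A))"
      by (subst u) (intro span_scale span_diff g span_add fg)
    ultimately show "z \<in> span (insert g (insert (f - g) A))"
      by (auto intro: span_base)
  qed
qed

lemma step:
  fixes e :: "nat \<Rightarrow> 'a::euclidean_space"
  assumes fin: "finite I" and a: "a \<in> I" and b: "b \<in> I" and ab: "a \<noteq> b"
    and sum0: "(\<Sum>i\<in>I-{b}. e i) = 0" and fnorm: "norm (e a) = m"
    and u1: "norm u = 1" and uf: "inner u (e a) = 0" and la: "0 < la" and lb: "0 < lb"
    and lo: "\<bar>la - lb\<bar> < m" and hi: "m < la + lb"
  shows "\<exists>e'. norm (e' a) = la \<and> norm (e' b) = lb \<and> (\<forall>i\<in>I-{a,b}. e' i = e i) \<and>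
     (\<Sum>i\<in>I. e' i) = 0 \<and> span (e' ` I) = span (insert u (e ` (I-{b})))"
proof -
  define f where "f = e a"
  have f0: "f \<noteq> 0" using fnorm lo f_def by auto
  obtain g \<alpha> \<beta> where g: "norm g = la" "norm (f - g) = lb" "g = \<alpha> *\<^sub>R f + \<beta> *\<^sub>R u" "\<beta> \<noteq> 0"
    using split_vec[OF f0 u1 _ la lb] uf lo hi fnorm f_def by blast
  define e' where "e' = e(a := g, b := f - g)"
  have s1: "(\<Sum>i\<in>I. e' i) = e' b + (\<Sum>i\<in>I-{b}. e' i)"
    using fin b by (simp add: sum.remove)
  have s2: "(\<Sum>i\<in>I-{b}. e' i) = e' a + (\<Sum>i\<in>I-{b}-{a}. e' i)"
    using fin a ab by (simp add: sum.remove)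
  have s3: "(\<Sum>i\<in>I-{b}. e i) = e a + (\<Sum>i\<in>I-{b}-{a}. e i)"
    using fin a ab by (simp add: sum.remove)
  have s4: "(\<Sum>i\<in>I-{b}-{a}. e' i) = (\<Sum>i\<in>I-{b}-{a}. e i)"
    by (rule sum.cong) (auto simp: e'_def)
  have sum: "(\<Sum>i\<in>I. e' i) = 0"
    using s1 s2 s3 s4 sum0 ab unfolding e'_def f_def by (simp add: algebra_simps)
  have im1: "e' ` I = insert g (insert (f - g) (e ` (I-{b}-{a})))"
  proof -
    have "I = insert a (insert b (I-{b}-{a}))" using a b by auto
    hence "e' ` I = insert (e' a) (insert (e' b) (e' ` (I-{b}-{a})))" by (metis image_insert)
    moreover have "e' ` (I-{b}-{a}) = e ` (I-{b}-{a})" by (rule image_cong) (auto simp: e'_def)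
    ultimately show ?thesis using ab by (simp add: e'_def)
  qed
  have im2: "e ` (I-{b}) = insert f (e ` (I-{b}-{a}))" using a ab f_def by auto
  have "span (e' ` I) = span (insert u (e ` (I-{b})))"
    unfolding im1 im2 using span_split[OF g(3) g(4)] by simp
  moreover have "norm (e' a) = la" "norm (e' b) = lb" using g ab by (auto simp: e'_def)
  moreover have "\<forall>i\<in>I-{a,b}. e' i = e i" by (auto simp: e'_def)
  ultimately show ?thesis using sum by blast
qed

lemma ex_min_real:
  fixes l :: "nat \<Rightarrow> real"
  assumes "finite I" "I \<noteq> {}"
  shows "\<exists>a\<in>I. \<forall>i\<in>I. l a \<le> l i"
proof -
  obtain a where "a \<in> I" "l a = Min (l ` I)" using Min_in[of "l ` I"] assms by (metis (mono_tags) finite_imageI image_iff image_is_empty)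
  moreover have "\<forall>i\<in>I. Min (l ` I) \<le> l i" using assms(1) by simp
  ultimately show ?thesis by metis
qed

lemma unit_orth:
  fixes x :: "'a::euclidean_space"
  assumes "x \<noteq> 0"
  shows "norm (x /\<^sub>R norm x) = 1" "orthogonal x y \<Longrightarrow> inner (x /\<^sub>R norm x) y = 0"
  using assms by (auto simp: orthogonal_def)

lemma not_in_span_orth:
  fixes u :: "'a::euclidean_space"
  assumes "u \<noteq> 0" "\<And>y. y \<in> span S \<Longrightarrow> inner u y = 0"
  shows "u \<notin> span S"
  using assms by (metis inner_eq_zero_iff)

lemma main:
  fixes l :: "nat \<Rightarrow> real"
  shows "finite I \<Longrightarrow> card I = N \<Longrightarrow> N \<ge> 3 \<Longrightarrow>
    (\<forall>i\<in>I. 0 < l i \<and> l i < (\<Sum>j\<in>I-{i}. l j)) \<Longrightarrow> 2 \<le> k \<Longrightarrow> k \<le> N - 1 \<Longrightarrow>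
    k \<le> DIM('a::euclidean_space) \<Longrightarrow>
    \<exists>e::nat \<Rightarrow> 'a. (\<forall>i\<in>I. norm (e i) = l i) \<and> (\<Sum>i\<in>I. e i) = 0 \<and> dim (e ` I) = k"
proof (induction N arbitrary: I l k rule: less_induct)
  case (less N)
  note fin = less.prems(1) and cardI = less.prems(2) and N3 = less.prems(3)
    and lC = less.prems(4) and k2 = less.prems(5) and kN = less.prems(6) and kD = less.prems(7)
  show ?case
  proof (cases "N = 3")
    case True
    then obtain a b c where I: "I = {a,b,c}" and ab: "a \<noteq> b" and bc: "b \<noteq> c" and ac: "a \<noteq> c"
      using cardI card_3_iff by metis
    have k: "k = 2" using k2 kN True by simp
    have la: "0 < l a" and lb: "0 < l b" and lc: "0 < l c" using lC I by auto
    have "l a < l b + l c" "l b < l a + l c" "l c < l a + l b"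
      using lC I ab bc ac by (auto simp: insert_Diff_if)
    hence lo: "\<bar>l a - l b\<bar> < l c" and hi: "l c < l a + l b" by auto
    obtain w :: 'a where w: "w \<in> Basis" using nonempty_Basis by blast
    define f where "f = l c *\<^sub>R w"
    have fn: "norm f = l c" using w lc f_def by simp
    have f0: "f \<noteq> 0" using fn lc by auto
    define e where "e = (\<lambda>i. if i = c then - f else f)"
    have eI: "e ` (I - {b}) = {f, - f}" using I ab bc ac by (auto simp: e_def)
    have "f \<in> span {-f}" using span_neg[OF span_base[of "-f" "{-f}"]] by simp
    hence dimf: "dim {f, -f} = 1"
      using f0 by (simp add: dim_insert span_neg span_base)
    obtain x :: 'a where x0: "x \<noteq> 0" and xo: "\<And>y. y \<in> span {f, -f} \<Longrightarrow> orthogonal x y"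
      using orthogonal_to_subspace_exists[of "{f, -f}"] dimf kD k by auto
    define u where "u = x /\<^sub>R norm x"
    have u1: "norm u = 1" using unit_orth x0 u_def by blast
    have uo: "\<And>y. y \<in> span {f, -f} \<Longrightarrow> inner u y = 0" using unit_orth(2) x0 xo u_def by blast
    have u0: "u \<noteq> 0" using u1 by auto
    have uf: "inner u (e a) = 0" using uo[of f] ac by (simp add: e_def span_base)
    have s0: "(\<Sum>i\<in>I-{b}. e i) = 0"
    proof -
      have "I - {b} = {a, c}" using I ab bc ac by auto
      thus ?thesis using ac by (simp add: e_def)
    qed
    have ea: "norm (e a) = l c" using ac fn by (simp add: e_def)
    obtain e' where e': "norm (e' a) = l a" "norm (e' b) = l b" "\<forall>i\<in>I-{a,b}. e' i = e i"
       "(\<Sum>i\<in>I. e' i) = 0" "span (e' ` I) = span (insert u (e ` (I-{b})))"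
      using step[OF fin _ _ ab s0 ea u1 uf la lb lo hi] I by auto
    have "norm (e' c) = l c" using e'(3) I ab bc ac fn by (simp add: e_def)
    hence norms: "\<forall>i\<in>I. norm (e' i) = l i" using e' I by auto
    have "dim (e' ` I) = dim (insert u {f, -f})"
      by (metis dim_span e'(5) eI)
    also have "\<dots> = 2" using not_in_span_orth[OF u0 uo] dimf by (simp add: dim_insert)
    finally show ?thesis using norms e'(4) k by blast
  next
    case False
    hence N4: "N \<ge> 4" using N3 by simp
    have Ine: "I \<noteq> {}" using cardI N3 by auto
    obtain a where a: "a \<in> I" "\<forall>i\<in>I. l a \<le> l i" using ex_min_real[OF fin Ine] by blast
    have Ia: "card (I - {a}) = N - 1" using a cardI fin by simp
    have Iane: "I - {a} \<noteq> {}"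
    proof
      assume "I - {a} = {}"
      hence "N - 1 = 0" using Ia by (metis card.empty)
      thus False using N4 by simp
    qed
    obtain b where b: "b \<in> I - {a}" "\<forall>i\<in>I-{a}. l b \<le> l i" using ex_min_real[OF _ Iane] fin by blast
    have ab: "a \<noteq> b" and bI: "b \<in> I" using b by auto
    define J where "J = I - {a,b}"
    have finJ: "finite J" using fin J_def by simp
    have cardJ: "card J = N - 2" using a b cardI fin unfolding J_def
      by (simp add: card_Diff_subset insert_subset)
    define T where "T = (\<Sum>j\<in>J. l j)"
    have lpos: "\<And>i. i \<in> I \<Longrightarrow> 0 < l i" using lC by auto
    have la: "0 < l a" and lb: "0 < l b" using lpos a bI by auto
    have Ji: "\<And>i. i \<in> J \<Longrightarrow> T = l i + (\<Sum>j\<in>J-{i}. l j)"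
      unfolding T_def using finJ by (simp add: sum.remove)
    have Jipos: "\<And>i. i \<in> J \<Longrightarrow> 0 < (\<Sum>j\<in>J-{i}. l j)"
    proof -
      fix i assume i: "i \<in> J"
      have ci: "card (J - {i}) = N - 3" using i cardJ finJ by simp
      have "J - {i} \<noteq> {}"
      proof
        assume "J - {i} = {}"
        hence "N - 3 = 0" using ci by (metis card.empty)
        thus False using N4 by simp
      qed
      thus "0 < (\<Sum>j\<in>J-{i}. l j)" using finJ lpos J_def by (intro sum_pos) auto
    qed
    have Isum: "\<And>i. i \<in> J \<Longrightarrow> (\<Sum>j\<in>I-{i}. l j) = l a + l b + (\<Sum>j\<in>J-{i}. l j)"
    proof -
      fix i assume i: "i \<in> J"
      have "I - {i} = insert a (insert b (J - {i}))" using i a bI unfolding J_def by auto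
      thus "(\<Sum>j\<in>I-{i}. l j) = l a + l b + (\<Sum>j\<in>J-{i}. l j)"
        using finJ ab unfolding J_def by simp
    qed
    have Jne: "J \<noteq> {}" using cardJ N4 by auto
    then obtain c where c: "c \<in> J" by blast
    have "l c \<le> T" unfolding T_def using finJ c lpos J_def by (intro member_le_sum) (auto simp: less_imp_le)
    moreover have "l b \<le> l c" using b c J_def by auto
    moreover have "l a \<le> l b" using a bI by auto
    ultimately have abT: "\<bar>l a - l b\<bar> < T" using la by auto
    define LB where "LB = insert \<bar>l a - l b\<bar> ((\<lambda>i. 2 * l i - T) ` J)"
    have finLB: "finite LB" using finJ LB_def by simp
    have LBhi: "\<And>x. x \<in> LB \<Longrightarrow> x < l a + l b \<and> x < T"
    proof -
      fix x assume "x \<in> LB"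
      then consider "x = \<bar>l a - l b\<bar>" | i where "i \<in> J" "x = 2 * l i - T" unfolding LB_def by auto
      thus "x < l a + l b \<and> x < T"
      proof cases
        case 1 thus ?thesis using abT la lb by auto
      next
        case 2
        have "l i < (\<Sum>j\<in>I-{i}. l j)" using lC 2(1) J_def by auto
        thus ?thesis using Isum[OF 2(1)] Ji[OF 2(1)] Jipos[OF 2(1)] 2(2) by auto
      qed
    qed
    define lo where "lo = Max LB"
    have loLB: "lo \<in> LB" using Max_in finLB LB_def lo_def by auto
    define m where "m = (lo + min (l a + l b) T) / 2"
    have mlo: "\<And>x. x \<in> LB \<Longrightarrow> x < m"
    proof -
      fix x assume x: "x \<in> LB"
      have "x \<le> lo" using Max_ge[OF finLB x] lo_def by simp
      thus "x < m" using LBhi[OF loLB] unfolding m_def by auto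
    qed
    have mhi: "m < l a + l b" "m < T" using LBhi[OF loLB] unfolding m_def by auto
    have m1: "\<bar>l a - l b\<bar> < m" using mlo LB_def by auto
    have m2: "\<And>i. i \<in> J \<Longrightarrow> 2 * l i - T < m" using mlo LB_def by auto
    define I' where "I' = I - {b}"
    define l' where "l' = l(a := m)"
    have finI': "finite I'" using fin I'_def by simp
    have cardI': "card I' = N - 1" using cardI fin bI I'_def by simp
    have aI': "a \<in> I'" using a ab I'_def by auto
    have I'a: "I' - {a} = J" unfolding I'_def J_def by auto
    have lC': "\<forall>i\<in>I'. 0 < l' i \<and> l' i < (\<Sum>j\<in>I'-{i}. l' j)"
    proof
      fix i assume i: "i \<in> I'"
      show "0 < l' i \<and> l' i < (\<Sum>j\<in>I'-{i}. l' j)"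
      proof (cases "i = a")
        case True
        have "(\<Sum>j\<in>I'-{i}. l' j) = T" unfolding T_def True I'a
          by (rule sum.cong) (auto simp: l'_def J_def)
        thus ?thesis using True m1 mhi by (auto simp: l'_def)
      next
        case False
        hence iJ: "i \<in> J" using i I'_def J_def by auto
        have "(\<Sum>j\<in>I'-{i}. l' j) = l' a + (\<Sum>j\<in>I'-{i}-{a}. l' j)"
          using finI' aI' False by (simp add: sum.remove)
        also have "I' - {i} - {a} = J - {i}" unfolding I'_def J_def by auto
        also have "(\<Sum>j\<in>J-{i}. l' j) = (\<Sum>j\<in>J-{i}. l j)"
          by (rule sum.cong) (auto simp: l'_def J_def)
        finally have "(\<Sum>j\<in>I'-{i}. l' j) = m + (\<Sum>j\<in>J-{i}. l j)" by (simp add: l'_def)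
        thus ?thesis using False m2[OF iJ] Ji[OF iJ] lpos[of i] i I'_def by (auto simp: l'_def)
      qed
    qed
    have ltN: "N - 1 < N" using N4 by simp
    have h3: "3 \<le> N - 1" using N4 by simp
    have final: "\<exists>e'::nat\<Rightarrow>'a. (\<forall>i\<in>I. norm (e' i) = l i) \<and> (\<Sum>i\<in>I. e' i) = 0 \<and> dim (e' ` I) = k"
      if e: "\<forall>i\<in>I'. norm (e i) = l' i" "(\<Sum>i\<in>I'. e i) = 0"
        and u: "norm u = 1" "inner u (e a) = 0" "dim (insert u (e ` I')) = k" for e :: "nat \<Rightarrow> 'a" and u
    proof -
      have ea: "norm (e a) = m" using e aI' by (simp add: l'_def)
      obtain e' where e': "norm (e' a) = l a" "norm (e' b) = l b" "\<forall>i\<in>I-{a,b}. e' i = e i"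
         "(\<Sum>i\<in>I. e' i) = 0" "span (e' ` I) = span (insert u (e ` (I-{b})))"
        using step[of I a b e m u "l a" "l b", OF fin a(1) bI ab _ ea u(1) u(2) la lb m1 mhi(1)] e(2) I'_def by blast
      have "\<forall>i\<in>I. norm (e' i) = l i"
      proof
        fix i assume i: "i \<in> I"
        show "norm (e' i) = l i"
        proof (cases "i = a \<or> i = b")
          case True thus ?thesis using e' by auto
        next
          case False thus ?thesis using e' e(1) i I'_def by (auto simp: l'_def)
        qed
      qed
      moreover have "dim (e' ` I) = k" using e'(5) u(3) I'_def by (metis dim_span)
      ultimately show ?thesis using e'(4) by blast
    qed
    show ?thesis
    proof (cases "k \<le> N - 2")
      case True
      obtain e :: "nat \<Rightarrow> 'a" where e: "\<forall>i\<in>I'. norm (e i) = l' i" "(\<Sum>i\<in>I'. e i) = 0" "dim (e ` I') = k"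
        using less.IH[OF ltN finI' cardI' h3 lC' k2 _ kD] True by (metis diff_diff_left one_add_one)
      have ea: "norm (e a) = m" using e aI' by (simp add: l'_def)
      hence ea0: "e a \<noteq> 0" using m1 by auto
      have d1: "dim {e a} = 1" using ea0 by (simp add: dim_insert)
      have "span {e a} \<subset> span (e ` I')"
      proof
        show "span {e a} \<subseteq> span (e ` I')" using aI' by (intro span_mono) auto
        show "span {e a} \<noteq> span (e ` I')"
          using d1 e(3) k2 by (metis dim_span numeral_le_one_iff semiring_norm(69))
      qed
      then obtain x where x: "x \<noteq> 0" "x \<in> span (e ` I')" "\<And>y. y \<in> span {e a} \<Longrightarrow> orthogonal x y"
        by (rule orthogonal_to_subspace_exists_gen) blast
      define u where "u = x /\<^sub>R norm x"
      have u1: "norm u = 1" using unit_orth x u_def by blast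
      have uf: "inner u (e a) = 0" using unit_orth(2)[OF x(1) x(3)] u_def span_base by blast
      have "u \<in> span (e ` I')" using x(2) u_def by (simp add: span_scale)
      hence "dim (insert u (e ` I')) = k" using e(3) by (simp add: dim_insert)
      thus ?thesis using final[OF e(1) e(2) u1 uf] by blast
    next
      case False
      hence kk: "k = N - 1" using kN by simp
      obtain e :: "nat \<Rightarrow> 'a" where e: "\<forall>i\<in>I'. norm (e i) = l' i" "(\<Sum>i\<in>I'. e i) = 0" "dim (e ` I') = k - 1"
        using less.IH[OF ltN finI' cardI' h3 lC', of "k - 1"] kk N4 kD by fastforce
      obtain x where x: "x \<noteq> 0" "\<And>y. y \<in> span (e ` I') \<Longrightarrow> orthogonal x y"
      proof -
        have "dim (e ` I') < DIM('a)" using e(3) kD k2 by simp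
        thus ?thesis using orthogonal_to_subspace_exists[of "e ` I'"] that by blast
      qed
      define u where "u = x /\<^sub>R norm x"
      have u1: "norm u = 1" using unit_orth x u_def by blast
      have uo: "\<And>y. y \<in> span (e ` I') \<Longrightarrow> inner u y = 0" using unit_orth(2)[OF x(1)] x(2) u_def by blast
      have uf: "inner u (e a) = 0" using uo aI' by (simp add: span_base)
      have u0: "u \<noteq> 0" using u1 by auto
      have "u \<notin> span (e ` I')" by (rule not_in_span_orth[OF u0 uo])
      hence "dim (insert u (e ` I')) = k" using e(3) k2 by (simp add: dim_insert)
      thus ?thesis using final[OF e(1) e(2) u1 uf] by blast
    qed
  qed
qed

theorem proposition3p3:
  fixes n :: nat and l :: "nat \<Rightarrow> real"
  assumes "n \<ge> 3" and "DIM('a::euclidean_space) \<ge> 2" and "l \<in> int_C_space n"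
  shows "\<forall>k\<in>{2..min DIM('a) (n - 1)}.
           \<exists>v::nat \<Rightarrow> 'a. v \<in> polygon_space n l \<and> polygon_dim n v = k"
proof
  fix k assume k: "k \<in> {2..min DIM('a) (n - 1)}"
  have lC: "\<forall>i\<in>{1..n}. 0 < l i \<and> l i < (\<Sum>j\<in>{1..n}-{i}. l j)"
    using assms(3) unfolding int_C_space_def by simp
  obtain e :: "nat \<Rightarrow> 'a" where e: "\<forall>i\<in>{1..n}. norm (e i) = l i" "(\<Sum>i\<in>{1..n}. e i) = 0"
      "dim (e ` {1..n}) = k"
    using main[of "{1..n}" n l k] assms(1) lC k by auto
  define S where "S = (\<lambda>i. \<Sum>j\<in>{1..i}. e j)"
  define v where "v = (\<lambda>i. if i \<in> {1..<n} then S i else 0)"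
  have S0: "S 0 = 0" by (simp add: S_def)
  have SSuc: "\<And>i. S (Suc i) = S i + e (Suc i)" by (simp add: S_def)
  have Sn: "S n = 0" using e(2) S_def by simp
  have vS: "\<And>i. i \<le> n \<Longrightarrow> v i = S i"
    using S0 Sn by (auto simp: v_def) (metis le_neq_implies_less not_less_eq_eq One_nat_def le_zero_eq)
  have diff: "\<And>i. i \<in> {1..n} \<Longrightarrow> v i - v (i - 1) = e i"
  proof -
    fix i assume i: "i \<in> {1..n}"
    then obtain j where j: "i = Suc j" by (cases i) auto
    thus "v i - v (i - 1) = e i" using vS[of i] vS[of j] i SSuc by auto
  qed
  have vpoly: "v \<in> polygon_space n l"
    unfolding polygon_space_def using diff e(1) by (auto simp: v_def)
  have "span (v ` {1..<n}) = span (e ` {1..n})"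
    unfolding span_eq
  proof (intro conjI subsetI)
    fix z assume "z \<in> v ` {1..<n}"
    then obtain i where i: "i \<in> {1..<n}" "z = v i" by auto
    have "z = (\<Sum>j\<in>{1..i}. e j)" using i by (simp add: v_def S_def)
    also have "\<dots> \<in> span (e ` {1..n})" using i by (intro span_sum span_base) auto
    finally show "z \<in> span (e ` {1..n})" .
  next
    fix z assume "z \<in> e ` {1..n}"
    then obtain i where i: "i \<in> {1..n}" "z = e i" by auto
    have vin: "\<And>j. v j \<in> span (v ` {1..<n})"
      by (case_tac "j \<in> {1..<n}") (auto simp: v_def span_base span_zero)
    have "z = v i - v (i - 1)" using diff i by simp
    also have "\<dots> \<in> span (v ` {1..<n})" by (intro span_diff vin)
    finally show "z \<in> span (v ` {1..<n})" .
  qed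
  hence "polygon_dim n v = k" unfolding polygon_dim_def using e(3) by (metis dim_span)
  thus "\<exists>v::nat \<Rightarrow> 'a. v \<in> polygon_space n l \<and> polygon_dim n v = k" using vpoly by blast
qed

end
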